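(* Let $q$ be a probability density on $\mathbb{R}^d$, let $\mathcal{K}:\mathbb{R}^d\times\mathbb{R}^d\to\mathbb{R}$ be a symmetric, positive semi-definite, twice continuously differentiable kernel, and let $\bm{x}^1,\dots,\bm{x}^K\in\mathbb{R}^d$ be samples from $q$. Define the kernel matrix $\mathbf{K}\in\mathbb{R}^{K\times K}$ by $\mathbf{K}_{ij}=\mathcal{K}(\bm{x}^i,\bm{x}^j)$ and the matrix $\langle \nabla,\mathbf{K}\rangle\in\mathbb{R}^{K\times d}$ by $\langle \nabla,\mathbf{K}\rangle_{ij}=\sum_{k=1}^K \frac{\partial}{\partial x^k_j}\mathcal{K}(\bm{x}^i,\bm{x}^k)$, where $x^k_j$ is the $j$-th coordinate of $\bm{x}^k$. Let $\eta\ge 0$ be such that $\mathbf{K}+\eta\mathbf{I}$ is invertible, and define the Stein gradient estimator $$\hat{\mathbf{G}}^{\mathrm{Stein}}_V := -(\mathbf{K}+\eta\mathbf{I})^{-1}\langle\nabla,\mathbf{K}\rangle\in\mathbb{R}^{K\times d}.$$ For a matrix $\hat{\mathbf{G}}\in\mathbb{R}^{K\times d}$, write $\hat{\bm{g}}(\bm{x}^k)\in\mathbb{R}^{d}$ for (the transpose of) its $k$-th row, and define the V-statistic of the kernelised Stein discrepancy $$\mathcal{S}_V^2(q,\hat q) := \frac{1}{K^2}\sum_{j=1}^K\sum_{l=1}^K\Big[\hat{\bm{g}}(\bm{x}^j)^{\mathrm T}\mathbf{K}_{jl}\hat{\bm{g}}(\bm{x}^l)+\hat{\bm{g}}(\bm{x}^j)^{\mathrm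 T}\nabla_{\bm{x}^l}\mathcal{K}(\bm{x}^j,\bm{x}^l)+\nabla_{\bm{x}^j}\mathcal{K}(\bm{x}^j,\bm{x}^l)^{\mathrm T}\hat{\bm{g}}(\bm{x}^l)+\mathrm{Tr}\big(\nabla_{\bm{x}^j,\bm{x}^l}\mathcal{K}(\bm{x}^j,\bm{x}^l)\big)\Big],$$ where $\nabla_{\bm{x}^j,\bm{x}^l}\mathcal{K}(\bm{x}^j,\bm{x}^l)$ is the $d\times d$ matrix of mixed second partial derivatives. Then $$\hat{\mathbf{G}}^{\mathrm{Stein}}_V=\operatorname*{argmin}_{\hat{\mathbf{G}}\in\mathbb{R}^{K\times d}}\ \mathcal{S}_V^2(q,\hat q)+\frac{\eta}{K^2}\|\hat{\mathbf{G}}\|_F^2,$$ where $\|\cdot\|_F$ is the Frobenius norm.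
   Context: Here $\hat{\mathbf{G}}$ is viewed as an approximation of the matrix whose $k$-th row is $\nabla_{\bm{x}}\log q(\bm{x}^k)^{\mathrm T}$, i.e. $\hat{\bm{g}}(\bm{x}^k)$ plays the role of $\nabla_{\bm{x}}\log\hat q(\bm{x}^k)$ for some approximating density $\hat q$; the objective depends on $\hat q$ only through the values $\hat{\bm{g}}(\bm{x}^k)$, $k=1,\dots,K$. *)

theory Defs
  imports "HOL-Analysis.Analysis"
begin

definition kernel_C2 :: "(real^'d \<Rightarrow> real^'d \<Rightarrow> real) \<Rightarrow> bool" where
  "kernel_C2 \<kappa> \<longleftrightarrow>
     (\<exists>D D2. (\<forall>z. ((\<lambda>p. \<kappa> (fst p) (snd p)) has_derivative blinfun_apply (D z)) (at z))
           \<and> (\<forall>z. (D has_derivative blinfun_apply (D2 z)) (at z))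
           \<and> continuous_on UNIV D2)"

definition kernel_symmetric :: "('a \<Rightarrow> 'a \<Rightarrow> real) \<Rightarrow> bool" where
  "kernel_symmetric \<kappa> \<longleftrightarrow> (\<forall>a b. \<kappa> a b = \<kappa> b a)"

definition kernel_psd :: "('a \<Rightarrow> 'a \<Rightarrow> real) \<Rightarrow> bool" where
  "kernel_psd \<kappa> \<longleftrightarrow>
     (\<forall>(n::nat) (xs::nat \<Rightarrow> 'a) (c::nat \<Rightarrow> real).
        (\<Sum>i<n. \<Sum>j<n. c i * c j * \<kappa> (xs i) (xs j)) \<ge> 0)"

definition grad1 :: "(real^'d \<Rightarrow> real^'d \<Rightarrow> real) \<Rightarrow> real^'d \<Rightarrow> real^'d \<Rightarrow> real^'d" where
  "grad1 \<kappa> a b = (\<chi> i. deriv (\<lambda>t. \<kappa> (a + t *\<^sub>R axis i 1) b) 0)"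

definition grad2 :: "(real^'d \<Rightarrow> real^'d \<Rightarrow> real) \<Rightarrow> real^'d \<Rightarrow> real^'d \<Rightarrow> real^'d" where
  "grad2 \<kappa> a b = (\<chi> i. deriv (\<lambda>t. \<kappa> a (b + t *\<^sub>R axis i 1)) 0)"

definition grad12 :: "(real^'d \<Rightarrow> real^'d \<Rightarrow> real) \<Rightarrow> real^'d \<Rightarrow> real^'d \<Rightarrow> real^'d^'d" where
  "grad12 \<kappa> a b = (\<chi> i j. deriv (\<lambda>s. grad2 \<kappa> (a + s *\<^sub>R axis i 1) b $ j) 0)"

definition mtrace :: "real^'n^'n \<Rightarrow> real" where
  "mtrace A = (\<Sum>i\<in>UNIV. A $ i $ i)"

definition kmat :: "(real^'d \<Rightarrow> real^'d \<Rightarrow> real) \<Rightarrow> ('k::finite \<Rightarrow> real^'d) \<Rightarrow> real^'k^'k" where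
  "kmat \<kappa> x = (\<chi> i j. \<kappa> (x i) (x j))"

definition nabla_kmat :: "(real^'d \<Rightarrow> real^'d \<Rightarrow> real) \<Rightarrow> ('k::finite \<Rightarrow> real^'d) \<Rightarrow> real^'d^'k" where
  "nabla_kmat \<kappa> x = (\<chi> i j. \<Sum>k\<in>UNIV. grad2 \<kappa> (x i) (x k) $ j)"

definition stein_estimator ::
  "(real^'d \<Rightarrow> real^'d \<Rightarrow> real) \<Rightarrow> ('k::finite \<Rightarrow> real^'d) \<Rightarrow> real \<Rightarrow> real^'d^'k" where
  "stein_estimator \<kappa> x \<eta> = - (matrix_inv (kmat \<kappa> x + \<eta> *\<^sub>R mat 1) ** nabla_kmat \<kappa> x)"

text \<open>V-statistic of the KSD; row k of G is G $ k (the vector g(x^k)).\<close>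
definition ksd_V :: "(real^'d \<Rightarrow> real^'d \<Rightarrow> real) \<Rightarrow> ('k::finite \<Rightarrow> real^'d) \<Rightarrow> real^'d^'k \<Rightarrow> real" where
  "ksd_V \<kappa> x G = (1 / (real CARD('k))\<^sup>2) *
     (\<Sum>j\<in>UNIV. \<Sum>l\<in>UNIV.
        (G $ j) \<bullet> (kmat \<kappa> x $ j $ l *\<^sub>R G $ l)
        + (G $ j) \<bullet> grad2 \<kappa> (x j) (x l)
        + grad1 \<kappa> (x j) (x l) \<bullet> (G $ l)
        + mtrace (grad12 \<kappa> (x j) (x l)))"

definition frob_sq :: "real^'n^'m \<Rightarrow> real" where
  "frob_sq A = (\<Sum>i\<in>UNIV. \<Sum>j\<in>UNIV. (A $ i $ j)\<^sup>2)"

definition argmin_set :: "('a \<Rightarrow> real) \<Rightarrow> 'a set" where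
  "argmin_set f = {x. \<forall>y. f x \<le> f y}"

end

theory Submission imports Defs begin
lemma quad_expand:
  fixes A :: "'k::finite \<Rightarrow> 'k \<Rightarrow> real" and h s n :: "'k \<Rightarrow> 'd::finite \<Rightarrow> real"
  assumes sym: "\<And>j l. A j l = A l j"
    and hS: "\<And>j i. (\<Sum>l\<in>UNIV. A j l * s l i) = - n j i"
  shows "(\<Sum>j\<in>UNIV. \<Sum>l\<in>UNIV. \<Sum>i\<in>UNIV. A j l * (h j i + s j i) * (h l i + s l i))
           + 2 * (\<Sum>j\<in>UNIV. \<Sum>i\<in>UNIV. (h j i + s j i) * n j i)
       = ((\<Sum>j\<in>UNIV. \<Sum>l\<in>UNIV. \<Sum>i\<in>UNIV. A j l * s j i * s l i)
           + 2 * (\<Sum>j\<in>UNIV. \<Sum>i\<in>UNIV. s j i * n j i))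
         + (\<Sum>j\<in>UNIV. \<Sum>l\<in>UNIV. \<Sum>i\<in>UNIV. A j l * h j i * h l i)"
proof -
  have c1: "(\<Sum>j\<in>UNIV. \<Sum>l\<in>UNIV. \<Sum>i\<in>UNIV. A j l * h j i * s l i) = - (\<Sum>j\<in>UNIV. \<Sum>i\<in>UNIV. h j i * n j i)"
  proof -
    have "(\<Sum>j\<in>UNIV. \<Sum>l\<in>UNIV. \<Sum>i\<in>UNIV. A j l * h j i * s l i)
        = (\<Sum>j\<in>UNIV. \<Sum>i\<in>UNIV. h j i * (\<Sum>l\<in>UNIV. A j l * s l i))"
      by (rule sum.cong[OF refl], subst sum.swap) (simp add: sum_distrib_left mult_ac)
    also have "\<dots> = - (\<Sum>j\<in>UNIV. \<Sum>i\<in>UNIV. h j i * n j i)"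
      by (simp add: hS sum_negf)
    finally show ?thesis .
  qed
  have c2: "(\<Sum>j\<in>UNIV. \<Sum>l\<in>UNIV. \<Sum>i\<in>UNIV. A j l * s j i * h l i)
      = (\<Sum>j\<in>UNIV. \<Sum>l\<in>UNIV. \<Sum>i\<in>UNIV. A j l * h j i * s l i)"
    by (subst sum.swap) (simp add: sym mult_ac)
  have e: "(\<Sum>j\<in>UNIV. \<Sum>l\<in>UNIV. \<Sum>i\<in>UNIV. A j l * (h j i + s j i) * (h l i + s l i))
     = (\<Sum>j\<in>UNIV. \<Sum>l\<in>UNIV. \<Sum>i\<in>UNIV. A j l * h j i * h l i)
      + (\<Sum>j\<in>UNIV. \<Sum>l\<in>UNIV. \<Sum>i\<in>UNIV. A j l * h j i * s l i)
      + (\<Sum>j\<in>UNIV. \<Sum>l\<in>UNIV. \<Sum>i\<in>UNIV. A j l * s j i * h l i)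
      + (\<Sum>j\<in>UNIV. \<Sum>l\<in>UNIV. \<Sum>i\<in>UNIV. A j l * s j i * s l i)"
    by (simp add: sum.distrib algebra_simps)
  have e2: "(\<Sum>j\<in>UNIV. \<Sum>i\<in>UNIV. (h j i + s j i) * n j i) = (\<Sum>j\<in>UNIV. \<Sum>i\<in>UNIV. h j i * n j i) + (\<Sum>j\<in>UNIV. \<Sum>i\<in>UNIV. s j i * n j i)"
    by (simp add: sum.distrib algebra_simps)
  show ?thesis unfolding e e2 c2 c1 by simp
qed
lemma pd_lemma:
  fixes A :: "real^'k::finite^'k"
  assumes sym: "\<And>j l. A$j$l = A$l$j"
    and psd: "\<And>v. v \<bullet> (A *v v) \<ge> 0"
    and inv: "invertible A"
    and z: "v \<bullet> (A *v v) = 0"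
  shows "v = 0"
proof -
  have symd: "w \<bullet> (A *v u) = u \<bullet> (A *v w)" for u w
  proof -
    have "(\<Sum>i\<in>UNIV. w $ i * (\<Sum>j\<in>UNIV. A $ i $ j * u $ j)) = (\<Sum>i\<in>UNIV. \<Sum>j\<in>UNIV. w $ i * A $ i $ j * u $ j)"
      by (simp add: sum_distrib_left mult_ac)
    also have "\<dots> = (\<Sum>j\<in>UNIV. \<Sum>i\<in>UNIV. w $ i * A $ i $ j * u $ j)" by (rule sum.swap)
    also have "\<dots> = (\<Sum>i\<in>UNIV. u $ i * (\<Sum>j\<in>UNIV. A $ i $ j * w $ j))"
      by (simp add: sum_distrib_left mult_ac sym)
    finally show ?thesis unfolding inner_vec_def matrix_vector_mult_def inner_real_def by simp
  qed
  have key: "w \<bullet> (A *v v) = 0" for w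
  proof -
    define a where "a = w \<bullet> (A *v v)"
    define b where "b = w \<bullet> (A *v w)"
    have b0: "b \<ge> 0" using psd b_def by simp
    define t where "t = - a / (b + 1)"
    have "(v + t *\<^sub>R w) \<bullet> (A *v (v + t *\<^sub>R w)) = 2 * t * a + t^2 * b"
      using z symd[of v w]
      by (simp add: matrix_vector_right_distrib inner_add_left inner_add_right
           matrix_vector_mult_scaleR a_def b_def power2_eq_square algebra_simps)
    hence ge: "2 * t * a + t^2 * b \<ge> 0" using psd by metis
    have "2 * t * a + t^2 * b = a^2 * (- b - 2) / (b + 1)^2"
    proof -
      have hb: "b + 1 \<noteq> 0" using b0 by simp
      show ?thesis unfolding t_def using hb
        by (simp add: divide_simps power2_eq_square) (simp add: algebra_simps)
    qed
    with ge have "a^2 * (- b - 2) / (b + 1)^2 \<ge> 0" by simp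
    moreover have "(b+1)^2 > 0" using b0 by simp
    ultimately have "a^2 * (- b - 2) \<ge> 0" by (simp add: zero_le_divide_iff)
    moreover have "a^2 * (- b - 2) = - (a^2 * (b + 2))" by (simp add: algebra_simps)
    moreover have "a^2 * (b + 2) \<ge> 0" using b0 by simp
    ultimately have "a^2 * (b + 2) = 0" by linarith
    hence "a^2 \<le> 0" using b0 by simp
    thus ?thesis unfolding a_def by simp
  qed
  have "(A *v v) \<bullet> (A *v v) = 0" by (rule key)
  hence Av: "A *v v = 0" by simp
  from inv obtain B where "B ** A = mat 1" unfolding invertible_def by blast
  hence "v = B *v (A *v v)" by (simp add: matrix_vector_mul_assoc)
  thus ?thesis using Av by simp
qed

lemma kmat_psd:
  fixes \<kappa> :: "real^'d \<Rightarrow> real^'d \<Rightarrow> real" and x :: "'k::finite \<Rightarrow> real^'d"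
  assumes "kernel_psd \<kappa>"
  shows "v \<bullet> (kmat \<kappa> x *v v) \<ge> 0"
proof -
  obtain h where h: "bij_betw h {0..<card (UNIV::'k set)} (UNIV::'k set)"
    using ex_bij_betw_nat_finite[of "UNIV::'k set"] by auto
  let ?n = "card (UNIV::'k set)"
  have "0 \<le> (\<Sum>i<?n. \<Sum>j<?n. v$(h i) * v$(h j) * \<kappa> (x (h i)) (x (h j)))"
    using assms unfolding kernel_psd_def
    by (erule_tac x="?n" in allE, erule_tac x="x \<circ> h" in allE, erule_tac x="\<lambda>i. v$(h i)" in allE) simp
  also have "\<dots> = (\<Sum>i\<in>UNIV. \<Sum>j\<in>UNIV. v$i * v$j * \<kappa> (x i) (x j))"
    unfolding lessThan_atLeast0
    by (simp add: sum.reindex_bij_betw[OF h, of "\<lambda>i. \<Sum>j\<in>UNIV. v$i * v$j * \<kappa> (x i) (x j)"]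
        sum.reindex_bij_betw[OF h, of "\<lambda>j. v$_ * v$j * \<kappa> (x _) (x j)"])
  also have "\<dots> = v \<bullet> (kmat \<kappa> x *v v)"
    unfolding inner_vec_def matrix_vector_mult_def kmat_def inner_real_def
    by (simp add: sum_distrib_left mult_ac)
  finally show ?thesis .
qed

lemma grad1_sym:
  assumes "kernel_symmetric \<kappa>"
  shows "grad1 \<kappa> a b = grad2 \<kappa> b a"
proof -
  have "(\<lambda>t. \<kappa> (a + t *\<^sub>R axis i 1) b) = (\<lambda>t. \<kappa> b (a + t *\<^sub>R axis i 1))" for i
    using assms unfolding kernel_symmetric_def by metis
  thus ?thesis unfolding grad1_def grad2_def by simp
qed

lemma obj_eq:
  fixes \<kappa> :: "real^'d \<Rightarrow> real^'d \<Rightarrow> real" and x :: "'k::finite \<Rightarrow> real^'d" and G :: "real^'d^'k" and \<eta> :: real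
  assumes sym: "kernel_symmetric \<kappa>"
  defines "A \<equiv> kmat \<kappa> x + \<eta> *\<^sub>R mat 1"
  defines "N \<equiv> nabla_kmat \<kappa> x"
  shows "ksd_V \<kappa> x G + \<eta> / (real CARD('k))\<^sup>2 * frob_sq G
    = ((\<Sum>j\<in>UNIV. \<Sum>l\<in>UNIV. \<Sum>i\<in>UNIV. A$j$l * G$j$i * G$l$i)
        + 2 * (\<Sum>j\<in>UNIV. \<Sum>i\<in>UNIV. G$j$i * N$j$i)
        + (\<Sum>j\<in>UNIV. \<Sum>l\<in>UNIV. mtrace (grad12 \<kappa> (x j) (x l)))) / (real CARD('k))\<^sup>2"
proof -
  have a: "(\<Sum>j\<in>UNIV. \<Sum>l\<in>UNIV. (G $ j) \<bullet> (kmat \<kappa> x $ j $ l *\<^sub>R G $ l))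
     = (\<Sum>j\<in>UNIV. \<Sum>l\<in>UNIV. \<Sum>i\<in>UNIV. kmat \<kappa> x $ j $ l * G$j$i * G$l$i)"
    by (simp add: inner_vec_def sum_distrib_left mult_ac)
  have b: "(\<Sum>j\<in>UNIV. \<Sum>l\<in>UNIV. (G $ j) \<bullet> grad2 \<kappa> (x j) (x l))
     = (\<Sum>j\<in>UNIV. \<Sum>i\<in>UNIV. G$j$i * N$j$i)"
  proof -
    have "(\<Sum>j\<in>UNIV. \<Sum>l\<in>UNIV. (G $ j) \<bullet> grad2 \<kappa> (x j) (x l))
        = (\<Sum>j\<in>UNIV. \<Sum>l\<in>UNIV. \<Sum>i\<in>UNIV. G$j$i * grad2 \<kappa> (x j) (x l) $ i)"
      by (simp add: inner_vec_def)
    also have "\<dots> = (\<Sum>j\<in>UNIV. \<Sum>i\<in>UNIV. \<Sum>l\<in>UNIV. G$j$i * grad2 \<kappa> (x j) (x l) $ i)"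
      by (rule sum.cong[OF refl], rule sum.swap)
    also have "\<dots> = (\<Sum>j\<in>UNIV. \<Sum>i\<in>UNIV. G$j$i * N$j$i)"
      by (simp add: N_def nabla_kmat_def sum_distrib_left)
    finally show ?thesis .
  qed
  have c: "(\<Sum>j\<in>UNIV. \<Sum>l\<in>UNIV. grad1 \<kappa> (x j) (x l) \<bullet> (G $ l))
      = (\<Sum>j\<in>UNIV. \<Sum>l\<in>UNIV. (G $ j) \<bullet> grad2 \<kappa> (x j) (x l))"
    by (simp add: grad1_sym[OF sym] inner_commute, rule sum.swap)
  have d: "(\<Sum>j\<in>UNIV. \<Sum>l\<in>UNIV. \<Sum>i\<in>UNIV. A$j$l * G$j$i * G$l$i)
     = (\<Sum>j\<in>UNIV. \<Sum>l\<in>UNIV. \<Sum>i\<in>UNIV. kmat \<kappa> x $ j $ l * G$j$i * G$l$i) + \<eta> * frob_sq G"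
  proof -
    have "(\<Sum>j\<in>UNIV. \<Sum>l\<in>UNIV. \<Sum>i\<in>UNIV. A$j$l * G$j$i * G$l$i)
      = (\<Sum>j\<in>UNIV. \<Sum>l\<in>UNIV. \<Sum>i\<in>UNIV. kmat \<kappa> x $ j $ l * G$j$i * G$l$i
          + (if j = l then \<eta> * G$j$i * G$l$i else 0))"
      by (intro sum.cong refl) (auto simp: A_def mat_def algebra_simps)
    also have "\<dots> = (\<Sum>j\<in>UNIV. \<Sum>l\<in>UNIV. \<Sum>i\<in>UNIV. kmat \<kappa> x $ j $ l * G$j$i * G$l$i)
       + (\<Sum>j\<in>UNIV. \<Sum>l\<in>UNIV. \<Sum>i\<in>UNIV. (if j = l then \<eta> * G$j$i * G$l$i else 0))"
      by (simp add: sum.distrib)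
    also have "(\<Sum>j\<in>UNIV. \<Sum>l\<in>UNIV. \<Sum>i\<in>UNIV. (if j = l then \<eta> * G$j$i * G$l$i else 0)) = \<eta> * frob_sq G"
    proof -
      have "(\<Sum>j\<in>UNIV. \<Sum>l\<in>UNIV. \<Sum>i\<in>UNIV. (if j = l then \<eta> * G$j$i * G$l$i else 0))
         = (\<Sum>j\<in>UNIV. \<Sum>l\<in>UNIV. (if j = l then (\<Sum>i\<in>UNIV. \<eta> * G$j$i * G$l$i) else 0))"
        by (rule sum.cong[OF refl])+ simp
      also have "\<dots> = (\<Sum>j\<in>UNIV. \<Sum>i\<in>UNIV. \<eta> * G$j$i * G$j$i)"
        by (simp add: sum.delta)
      finally show ?thesis by (simp add: frob_sq_def sum_distrib_left power2_eq_square mult_ac)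
    qed
    finally show ?thesis .
  qed
  have split: "ksd_V \<kappa> x G = (1 / (real CARD('k))\<^sup>2) *
     ((\<Sum>j\<in>UNIV. \<Sum>l\<in>UNIV. (G $ j) \<bullet> (kmat \<kappa> x $ j $ l *\<^sub>R G $ l))
      + (\<Sum>j\<in>UNIV. \<Sum>l\<in>UNIV. (G $ j) \<bullet> grad2 \<kappa> (x j) (x l))
      + (\<Sum>j\<in>UNIV. \<Sum>l\<in>UNIV. grad1 \<kappa> (x j) (x l) \<bullet> (G $ l))
      + (\<Sum>j\<in>UNIV. \<Sum>l\<in>UNIV. mtrace (grad12 \<kappa> (x j) (x l))))"
    unfolding ksd_V_def by (simp add: sum.distrib)
  show ?thesis unfolding split a c b d by (simp add: field_simps)
qed

theorem theorem1:
  fixes \<kappa> :: "real^'d \<Rightarrow> real^'d \<Rightarrow> real"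
    and x :: "'k::finite \<Rightarrow> real^'d"
    and \<eta> :: real
  assumes "kernel_symmetric \<kappa>"
    and "kernel_psd \<kappa>"
    and "kernel_C2 \<kappa>"
    and "\<eta> \<ge> 0"
    and "invertible (kmat \<kappa> x + \<eta> *\<^sub>R mat 1)"
  shows "argmin_set (\<lambda>G. ksd_V \<kappa> x G + \<eta> / (real CARD('k))\<^sup>2 * frob_sq G)
           = {stein_estimator \<kappa> x \<eta>}"
proof -
  define A where "A = kmat \<kappa> x + \<eta> *\<^sub>R mat 1"
  define N where "N = nabla_kmat \<kappa> x"
  define S where "S = stein_estimator \<kappa> x \<eta>"
  define C where "C = (\<Sum>j\<in>UNIV. \<Sum>l\<in>UNIV. mtrace (grad12 \<kappa> (x j) (x l)))"
  define Phi where "Phi = (\<lambda>G::real^'d^'k. (\<Sum>j\<in>UNIV. \<Sum>l\<in>UNIV. \<Sum>i\<in>UNIV. A$j$l * G$j$i * G$l$i)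
        + 2 * (\<Sum>j\<in>UNIV. \<Sum>i\<in>UNIV. G$j$i * N$j$i))"
  define q where "q = (\<lambda>H::real^'d^'k. (\<Sum>j\<in>UNIV. \<Sum>l\<in>UNIV. \<Sum>i\<in>UNIV. A$j$l * H$j$i * H$l$i))"
  define F where "F = (\<lambda>G. ksd_V \<kappa> x G + \<eta> / (real CARD('k))\<^sup>2 * frob_sq G)"
  have inv: "invertible A" using assms(5) A_def by simp
  have Fe: "F G = (Phi G + C) / (real CARD('k))\<^sup>2" for G
    unfolding F_def Phi_def C_def A_def N_def using obj_eq[OF assms(1)] by simp
  have symA: "A$j$l = A$l$j" for j l
    using assms(1) unfolding A_def kmat_def kernel_symmetric_def by (simp add: mat_def)
  have psdA: "v \<bullet> (A *v v) \<ge> 0" for v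
  proof -
    have "v \<bullet> (A *v v) = v \<bullet> (kmat \<kappa> x *v v) + \<eta> * (v \<bullet> v)"
      unfolding A_def by (simp add: matrix_vector_mult_add_rdistrib scaleR_matrix_vector_assoc[symmetric] inner_add_right)
    thus ?thesis using kmat_psd[OF assms(2), of v x] assms(4) by simp
  qed
  have AI: "A ** matrix_inv A = mat 1"
    using inv unfolding invertible_def matrix_inv_def by (rule someI2_ex) blast
  have AS: "A ** S = - N"
  proof -
    have "A ** (matrix_inv A ** N) = N" by (simp add: matrix_mul_assoc AI)
    hence "(\<Sum>l\<in>UNIV. A$j$l * (matrix_inv A ** N)$l$i) = N$j$i" for j i
    proof -
      assume h: "A ** (matrix_inv A ** N) = N"
      have "(A ** (matrix_inv A ** N))$j$i = N$j$i" using h by simp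
      thus ?thesis by (simp add: matrix_matrix_mult_def)
    qed
    thus ?thesis unfolding S_def stein_estimator_def A_def[symmetric] N_def[symmetric]
      by (simp add: matrix_matrix_mult_def vec_eq_iff sum_negf)
  qed
  have hS: "(\<Sum>l\<in>UNIV. A$j$l * S$l$i) = - N$j$i" for j i
  proof -
    have "(A ** S)$j$i = (-N)$j$i" using AS by simp
    thus ?thesis by (simp add: matrix_matrix_mult_def)
  qed
  have PhiE: "Phi G = Phi S + q (G - S)" for G
    using quad_expand[of "\<lambda>j l. A$j$l" "\<lambda>j i. S$j$i" "\<lambda>j i. N$j$i" "\<lambda>j i. G$j$i - S$j$i"]
      symA hS unfolding Phi_def q_def by simp
  have qcol: "q H = (\<Sum>i\<in>UNIV. (\<chi> j. H$j$i) \<bullet> (A *v (\<chi> j. H$j$i)))" for H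
  proof -
    have "q H = (\<Sum>j\<in>UNIV. \<Sum>i\<in>UNIV. \<Sum>l\<in>UNIV. A$j$l * H$j$i * H$l$i)"
      unfolding q_def by (rule sum.cong[OF refl], rule sum.swap)
    also have "\<dots> = (\<Sum>i\<in>UNIV. \<Sum>j\<in>UNIV. \<Sum>l\<in>UNIV. A$j$l * H$j$i * H$l$i)" by (rule sum.swap)
    also have "\<dots> = (\<Sum>i\<in>UNIV. (\<chi> j. H$j$i) \<bullet> (A *v (\<chi> j. H$j$i)))"
      by (simp add: inner_vec_def matrix_vector_mult_def sum_distrib_left mult_ac)
    finally show ?thesis .
  qed
  have qnn: "q H \<ge> 0" for H unfolding qcol by (rule sum_nonneg) (rule psdA)
  have q0: "q H = 0 \<Longrightarrow> H = 0" for H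
  proof -
    assume "q H = 0"
    hence "\<forall>i\<in>UNIV. (\<chi> j. H$j$i) \<bullet> (A *v (\<chi> j. H$j$i)) = 0"
      unfolding qcol by (subst (asm) sum_nonneg_eq_0_iff) (auto intro: psdA)
    hence "(\<chi> j. H$j$i) = 0" for i using pd_lemma[OF symA psdA inv] by blast
    hence "H$j$i = 0" for j i
    proof -
      assume h: "\<And>i. (\<chi> j. H$j$i) = (0::real^'k)"
      have "(\<chi> j. H$j$i)$j = (0::real^'k)$j" using h by simp
      thus ?thesis by simp
    qed
    thus "H = 0" by (simp add: vec_eq_iff)
  qed
  have Kpos: "(real CARD('k))\<^sup>2 > 0" by simp
  have Smin: "F S \<le> F G" for G
    unfolding Fe PhiE[of G] using qnn[of "G - S"] Kpos by (simp add: divide_right_mono)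
  have "argmin_set F = {stein_estimator \<kappa> x \<eta>}"
  proof
    show "argmin_set F \<subseteq> {stein_estimator \<kappa> x \<eta>}"
    proof
      fix G assume "G \<in> argmin_set F"
      hence "F G \<le> F S" unfolding argmin_set_def by blast
      hence "q (G - S) \<le> 0" unfolding Fe PhiE[of G] using Kpos
        by (simp add: divide_le_cancel)
      hence "G - S = 0" using qnn[of "G - S"] q0[of "G - S"] by linarith
      thus "G \<in> {stein_estimator \<kappa> x \<eta>}" using S_def by simp
    qed
    show "{stein_estimator \<kappa> x \<eta>} \<subseteq> argmin_set F"
      using Smin S_def unfolding argmin_set_def by auto
  qed
  thus ?thesis unfolding F_def .
qed

end
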